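(* Let $S=\{(n,k)\in\mathbb Z_{>0}^2:\gcd(n,k)=1,\ n\ge3,\ n-k\text{ odd},\ k\not\equiv2\ (\mathrm{mod}\ 4)\}$ and $T=\{(m,q)\in\mathbb Z^2:1<q<m,\ \gcd(m,q)=1\}$. Define $\theta:S\to T$ by $\theta(n,k)=(n+\tfrac k2,\,n)$ if $n$ is odd and $\theta(n,k)=(\tfrac n2+k,\,\tfrac n2)$ if $n$ is even. Then $\theta$ is a well-defined bijection (with inverse $(m,q)\mapsto(q,2(m-q))$ if $m-q$ is even and $(m,q)\mapsto(2q,m-q)$ if $m-q$ is odd), and for every $(n,k)\in S$ there is an isomorphism $\Bbbk_{-1}[u,v]^{G_{n,k}}\cong\Bbbk[u,v]^{\mathbb D_{\theta(n,k)}}$.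
   Context: $\Bbbk$ is algebraically closed of characteristic $0$; $\Bbbk_{-1}[u,v]=\Bbbk\langle u,v\rangle/(vu+uv)$ and $\Bbbk[u,v]$ is the commutative polynomial ring; matrices $\begin{pmatrix}a&b\\c&d\end{pmatrix}$ act by $u\mapsto au+cv$, $v\mapsto bu+dv$. $G_{n,k}$ is generated by $\mathrm{diag}(\omega^{2k},\omega^{-2k})$ and $\begin{pmatrix}0&\omega^n\\\omega^n&0\end{pmatrix}$ for $\omega$ a primitive $(2nk)$th root of unity. For $(m,q)\in T$ and $\eta$ a primitive $4q(m-q)$th root of unity, $\mathbb D_{m,q}\le\mathrm{GL}(2,\Bbbk)$ is generated by $\mathrm{diag}(\eta^{2(m-q)},\eta^{-2(m-q)})$ and $\begin{pmatrix}0&\eta^q\\\eta^q&0\end{pmatrix}$. *)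

theory Defs
  imports "HOL-Computational_Algebra.Polynomial"
begin

definition alg_closed :: "'k::field itself \<Rightarrow> bool" where
  "alg_closed _ \<longleftrightarrow> (\<forall>p :: 'k poly. degree p > 0 \<longrightarrow> (\<exists>x. poly p x = 0))"

definition primitive_root :: "nat \<Rightarrow> 'k::field \<Rightarrow> bool" where
  "primitive_root N w \<longleftrightarrow> N > 0 \<and> w ^ N = 1 \<and> (\<forall>j. 0 < j \<and> j < N \<longrightarrow> w ^ j \<noteq> 1)"

section \<open>The rings k_e[u,v]: vu = e uv (e = -1 skew, e = 1 commutative)\<close>

text \<open>An element is a finitely supported coefficient function on monomials u^i v^j,
  indexed by (i,j).\<close>

type_synonym 'k qpoly = "nat \<times> nat \<Rightarrow> 'k"

definition supp :: "'k::zero qpoly \<Rightarrow> (nat \<times> nat) set" where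
  "supp p = {m. p m \<noteq> 0}"

definition qpolys :: "'k::zero qpoly set" where
  "qpolys = {p. finite (supp p)}"

definition qadd :: "'k::field qpoly \<Rightarrow> 'k qpoly \<Rightarrow> 'k qpoly" where
  "qadd p q = (\<lambda>m. p m + q m)"

definition qsmult :: "'k::field \<Rightarrow> 'k qpoly \<Rightarrow> 'k qpoly" where
  "qsmult c p = (\<lambda>m. c * p m)"

definition qone :: "'k::field qpoly" where
  "qone = (\<lambda>m. if m = (0,0) then 1 else 0)"

definition qU :: "'k::field qpoly" where
  "qU = (\<lambda>m. if m = (1,0) then 1 else 0)"

definition qV :: "'k::field qpoly" where
  "qV = (\<lambda>m. if m = (0,1) then 1 else 0)"

text \<open>(u^a v^b)(u^c v^d) = e^(b c) u^(a+c) v^(b+d).\<close>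
definition qmult :: "'k::field \<Rightarrow> 'k qpoly \<Rightarrow> 'k qpoly \<Rightarrow> 'k qpoly" where
  "qmult e p q = (\<lambda>(i,j). \<Sum>a\<le>i. \<Sum>b\<le>j. e ^ (b * (i - a)) * p (a,b) * q (i - a, j - b))"

fun qpow :: "'k::field \<Rightarrow> 'k qpoly \<Rightarrow> nat \<Rightarrow> 'k qpoly" where
  "qpow e p 0 = qone"
| "qpow e p (Suc n) = qmult e (qpow e p n) p"

text \<open>(a,b,c,d) stands for the matrix [[a,b],[c,d]].\<close>
type_synonym 'k mat2 = "'k \<times> 'k \<times> 'k \<times> 'k"

fun mmult :: "'k::field mat2 \<Rightarrow> 'k mat2 \<Rightarrow> 'k mat2" where
  "mmult (a,b,c,d) (a',b',c',d') = (a*a' + b*c', a*b' + b*d', c*a' + d*c', c*b' + d*d')"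

fun minv :: "'k::field mat2 \<Rightarrow> 'k mat2" where
  "minv (a,b,c,d) = (let t = a*d - b*c in (d/t, -b/t, -c/t, a/t))"

definition mid :: "'k::field mat2" where
  "mid = (1,0,0,1)"

inductive_set gen_group :: "'k::field mat2 set \<Rightarrow> 'k mat2 set" for gens where
  gg_id: "mid \<in> gen_group gens"
| gg_gen: "g \<in> gens \<Longrightarrow> g \<in> gen_group gens"
| gg_inv: "g \<in> gen_group gens \<Longrightarrow> minv g \<in> gen_group gens"
| gg_mult: "g \<in> gen_group gens \<Longrightarrow> h \<in> gen_group gens \<Longrightarrow> mmult g h \<in> gen_group gens"

text \<open>The matrix [[a,b],[c,d]] acts by u \<mapsto> a u + c v, v \<mapsto> b u + d v, extended
  multiplicatively: u^i v^j \<mapsto> (g u)^i (g v)^j.\<close>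
fun qact :: "'k::field \<Rightarrow> 'k mat2 \<Rightarrow> 'k qpoly \<Rightarrow> 'k qpoly" where
  "qact e (a,b,c,d) p =
     (let gu = qadd (qsmult a qU) (qsmult c qV);
          gv = qadd (qsmult b qU) (qsmult d qV)
      in (\<lambda>m. \<Sum>x\<in>supp p. p x * qmult e (qpow e gu (fst x)) (qpow e gv (snd x)) m))"

definition invariants :: "'k::field \<Rightarrow> 'k mat2 set \<Rightarrow> 'k qpoly set" where
  "invariants e G = {p \<in> qpolys. \<forall>g\<in>G. qact e g p = p}"

definition alg_iso_invariants ::
  "'k::field \<Rightarrow> 'k mat2 set \<Rightarrow> 'k \<Rightarrow> 'k mat2 set \<Rightarrow> bool" where
  "alg_iso_invariants e1 G e2 H \<longleftrightarrow>
     (\<exists>f. bij_betw f (invariants e1 G) (invariants e2 H)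
        \<and> (\<forall>x\<in>invariants e1 G. \<forall>y\<in>invariants e1 G.
              f (qadd x y) = qadd (f x) (f y) \<and> f (qmult e1 x y) = qmult e2 (f x) (f y))
        \<and> (\<forall>c. \<forall>x\<in>invariants e1 G. f (qsmult c x) = qsmult c (f x))
        \<and> f qone = qone)"

definition G_grp :: "int \<Rightarrow> int \<Rightarrow> 'k::field \<Rightarrow> 'k mat2 set" where
  "G_grp n k w = gen_group {(w powi (2*k), 0, 0, w powi (-2*k)), (0, w powi n, w powi n, 0)}"

definition D_grp :: "int \<Rightarrow> int \<Rightarrow> 'k::field \<Rightarrow> 'k mat2 set" where
  "D_grp m q h = gen_group {(h powi (2*(m-q)), 0, 0, h powi (-2*(m-q))), (0, h powi q, h powi q, 0)}"

definition S_set :: "(int \<times> int) set" where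
  "S_set = {(n,k). n > 0 \<and> k > 0 \<and> gcd n k = 1 \<and> n \<ge> 3 \<and> odd (n - k) \<and> k mod 4 \<noteq> 2}"

definition T_set :: "(int \<times> int) set" where
  "T_set = {(m,q). 1 < q \<and> q < m \<and> gcd m q = 1}"

definition theta :: "int \<times> int \<Rightarrow> int \<times> int" where
  "theta = (\<lambda>(n,k). if odd n then (n + k div 2, n) else (n div 2 + k, n div 2))"

definition theta_inv :: "int \<times> int \<Rightarrow> int \<times> int" where
  "theta_inv = (\<lambda>(m,q). if even (m - q) then (q, 2*(m-q)) else (2*q, m - q))"

end

theory Submission
  imports Defs
begin


definition monom :: "'k::field \<Rightarrow> nat \<times> nat \<Rightarrow> 'k qpoly" where
  "monom c x = (\<lambda>m. if m = x then c else 0)"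

lemma qmult_mono: "qmult e (monom A (a,b)) (monom B (c,d)) = monom (e^(b*c)*A*B) (a+c, b+d)"
proof (rule ext, clarify)
  fix i j
  have "qmult e (monom A (a,b)) (monom B (c,d)) (i,j) =
     (\<Sum>a'\<le>i. \<Sum>b'\<le>j. if a' = a then (if b' = b then (if i - a = c \<and> j - b = d then e^(b*(i-a))*A*B else 0) else 0) else 0)"
    unfolding qmult_def monom_def split by (intro sum.cong refl) auto
  also have "\<dots> = (\<Sum>a'\<le>i. if a' = a then (\<Sum>b'\<le>j. if b' = b then (if i - a = c \<and> j - b = d then e^(b*(i-a))*A*B else 0) else 0) else 0)"
    by (intro sum.cong refl) auto
  also have "\<dots> = (if a \<le> i \<and> b \<le> j \<and> i - a = c \<and> j - b = d then e^(b*c)*A*B else 0)"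
    by (simp add: sum.delta)
  also have "\<dots> = monom (e^(b*c)*A*B) (a+c, b+d) (i,j)"
    unfolding monom_def by auto
  finally show "qmult e (monom A (a,b)) (monom B (c,d)) (i,j) = monom (e^(b*c)*A*B) (a+c, b+d) (i,j)" .
qed

lemma qone_mono: "qone = monom 1 (0,0)" unfolding qone_def monom_def by auto

lemma qpow_U: "qpow e (monom A (1,0)) n = monom (A^n) (n,0)"
  by (induction n) (auto simp: qone_mono qmult_mono mult.commute)

lemma qpow_V: "qpow e (monom A (0,1)) n = monom (A^n) (0,n)"
  by (induction n) (auto simp: qone_mono qmult_mono mult.commute)

lemma qpow_UV: "qmult e (qpow e (monom x (1,0)) i) (qpow e (monom y (0,1)) j) = monom (x^i*y^j) (i,j)"
  by (simp only: qpow_U qpow_V qmult_mono) simp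

lemma qpow_VU: "qmult e (qpow e (monom c (0,1)) i) (qpow e (monom b (1,0)) j) = monom (e^(i*j)*c^i*b^j) (j,i)"
  by (simp only: qpow_U qpow_V qmult_mono) simp

lemma gu_diag: "qadd (qsmult x qU) (qsmult 0 qV) = monom x (1,0)"
  unfolding qadd_def qsmult_def qU_def monom_def by auto
lemma gv_diag: "qadd (qsmult 0 qU) (qsmult y qV) = monom y (0,1)"
  unfolding qadd_def qsmult_def qV_def monom_def by auto

lemma qact_diag: assumes "p \<in> qpolys"
  shows "qact e (x,0,0,y) p = (\<lambda>(i,j). x^i*y^j*p(i,j))"
proof (rule ext, clarify)
  fix i j
  have f: "finite (supp p)" using assms by (simp add: qpolys_def)
  have "qact e (x,0,0,y) p (i,j) = (\<Sum>z\<in>supp p. p z * monom (x^fst z * y^snd z) z (i,j))"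
    by (simp only: qact.simps Let_def gu_diag gv_diag qpow_UV prod.collapse)
  also have "\<dots> = (\<Sum>z\<in>supp p. if z = (i,j) then p z * (x^fst z * y^snd z) else 0)"
    by (intro sum.cong refl) (auto simp: monom_def)
  also have "\<dots> = x^i*y^j*p(i,j)" using f by (simp add: sum.delta supp_def)
  finally show "qact e (x,0,0,y) p (i,j) = x^i*y^j*p(i,j)" .
qed

lemma qact_anti: assumes "p \<in> qpolys"
  shows "qact e (0,b,c,0) p = (\<lambda>(i,j). c^j*b^i*e^(i*j)*p(j,i))"
proof (rule ext, clarify)
  fix i j
  have f: "finite (supp p)" using assms by (simp add: qpolys_def)
  have "qact e (0,b,c,0) p (i,j) = (\<Sum>z\<in>supp p. p z * monom (e^(fst z * snd z)*c^fst z * b^snd z) (snd z, fst z) (i,j))"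
    by (simp only: qact.simps Let_def gu_diag gv_diag qpow_VU)
  also have "\<dots> = (\<Sum>z\<in>supp p. if z = (j,i) then p z * (e^(fst z * snd z)*c^fst z * b^snd z) else 0)"
    by (intro sum.cong refl) (auto simp: monom_def)
  also have "\<dots> = c^j*b^i*e^(i*j)*p(j,i)" using f by (simp add: sum.delta supp_def mult.commute mult.left_commute)
  finally show "qact e (0,b,c,0) p (i,j) = c^j*b^i*e^(i*j)*p(j,i)" .
qed




definition fixd :: "'k::field qpoly \<Rightarrow> 'k \<Rightarrow> 'k \<Rightarrow> bool" where
  "fixd p x y \<longleftrightarrow> (\<forall>i j. x^i*y^j*p(i,j) = p(i,j))"
definition fixa :: "'k::field \<Rightarrow> 'k qpoly \<Rightarrow> 'k \<Rightarrow> 'k \<Rightarrow> bool" where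
  "fixa e p b c \<longleftrightarrow> (\<forall>i j. p(j,i) = c^i*b^j*e^(i*j)*p(i,j))"

definition Mset :: "'k::field \<Rightarrow> 'k qpoly \<Rightarrow> 'k mat2 set" where
  "Mset e p = {(x,0,0,y) | x y. x\<noteq>0 \<and> y\<noteq>0 \<and> fixd p x y} \<union> {(0,b,c,0) | b c. b\<noteq>0 \<and> c\<noteq>0 \<and> fixa e p b c}"

lemma e2: "(e::'k::field)*e = 1 \<Longrightarrow> e^(i*j)*e^(i*j) = 1"
  by (metis power_mult_distrib power_one)

lemma fix_dd: "fixd p x y \<Longrightarrow> fixd p x' y' \<Longrightarrow> fixd p (x*x') (y*y')"
  unfolding fixd_def
proof (intro allI)
  fix i j
  assume d: "\<forall>i j. x^i*y^j*p(i,j) = p(i,j)" and d': "\<forall>i j. x'^i*y'^j*p(i,j) = p(i,j)"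
  have "(x*x')^i*(y*y')^j*p(i,j) = x^i*y^j*(x'^i*y'^j*p(i,j))"
    by (simp add: power_mult_distrib algebra_simps)
  also have "\<dots> = p(i,j)" unfolding d'[rule_format] by (rule d[rule_format])
  finally show "(x*x')^i*(y*y')^j*p(i,j) = p(i,j)" .
qed

lemma fix_da: "fixd p x y \<Longrightarrow> fixa e p b c \<Longrightarrow> fixa e p (x*b) (y*c)"
  unfolding fixd_def fixa_def
proof (intro allI)
  fix i j
  assume d: "\<forall>i j. x^i*y^j*p(i,j) = p(i,j)" and a: "\<forall>i j. p(j,i) = c^i*b^j*e^(i*j)*p(i,j)"
  have "(y*c)^i*(x*b)^j*e^(i*j)*p(i,j) = x^j*y^i*(c^i*b^j*e^(i*j)*p(i,j))"
    by (simp add: power_mult_distrib algebra_simps)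
  also have "\<dots> = p(j,i)" using d a by metis
  finally show "p(j,i) = (y*c)^i*(x*b)^j*e^(i*j)*p(i,j)" by simp
qed

lemma fix_ad: "fixd p x y \<Longrightarrow> fixa e p b c \<Longrightarrow> fixa e p (b*y) (c*x)"
  unfolding fixd_def fixa_def
proof (intro allI)
  fix i j
  assume d: "\<forall>i j. x^i*y^j*p(i,j) = p(i,j)" and a: "\<forall>i j. p(j,i) = c^i*b^j*e^(i*j)*p(i,j)"
  have "(c*x)^i*(b*y)^j*e^(i*j)*p(i,j) = c^i*b^j*e^(i*j)*(x^i*y^j*p(i,j))"
    by (simp add: power_mult_distrib algebra_simps)
  also have "\<dots> = p(j,i)" using d a by metis
  finally show "p(j,i) = (c*x)^i*(b*y)^j*e^(i*j)*p(i,j)" by simp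
qed

lemma fix_aa: "e*e = 1 \<Longrightarrow> fixa e p b c \<Longrightarrow> fixa e p b' c' \<Longrightarrow> fixd p (b*c') (c*b')"
  unfolding fixd_def fixa_def
proof (intro allI)
  fix i j
  assume ee: "e*e = 1" and a: "\<forall>i j. p(j,i) = c^i*b^j*e^(i*j)*p(i,j)" and a': "\<forall>i j. p(j,i) = c'^i*b'^j*e^(i*j)*p(i,j)"
  have "(b*c')^i*(c*b')^j*p(i,j) = c^j*b^i*e^(j*i)*(c'^i*b'^j*e^(i*j)*p(i,j))"
    using e2[OF ee, of i j] by (simp add: power_mult_distrib algebra_simps)
  also have "\<dots> = p(i,j)" using a a' by metis
  finally show "(b*c')^i*(c*b')^j*p(i,j) = p(i,j)" .
qed

lemma fix_dinv: "x \<noteq> 0 \<Longrightarrow> y \<noteq> 0 \<Longrightarrow> fixd p x y \<Longrightarrow> fixd p (1/x) (1/y)"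
  unfolding fixd_def
proof (intro allI)
  fix i j
  assume x: "x\<noteq>0" "y\<noteq>0" and d: "\<forall>i j. x^i*y^j*p(i,j) = p(i,j)"
  have "(1/x)^i*(1/y)^j*p(i,j) = (1/x)^i*(1/y)^j*(x^i*y^j*p(i,j))" using d by metis
  also have "\<dots> = p(i,j)" using x by (simp add: power_one_over field_simps)
  finally show "(1/x)^i*(1/y)^j*p(i,j) = p(i,j)" .
qed

lemma fix_ainv: "e*e = 1 \<Longrightarrow> b \<noteq> 0 \<Longrightarrow> c \<noteq> 0 \<Longrightarrow> fixa e p b c \<Longrightarrow> fixa e p (1/c) (1/b)"
  unfolding fixa_def
proof (intro allI)
  fix i j
  assume ee: "e*e=1" and x: "b\<noteq>0" "c\<noteq>0" and a: "\<forall>i j. p(j,i) = c^i*b^j*e^(i*j)*p(i,j)"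
  have "(1/b)^i*(1/c)^j*e^(i*j)*p(i,j) = (1/b)^i*(1/c)^j*e^(i*j)*(c^j*b^i*e^(j*i)*p(j,i))" using a by metis
  also have "\<dots> = p(j,i)" using x e2[OF ee, of i j] by (simp add: power_one_over field_simps mult.commute)
  finally show "p(j,i) = (1/b)^i*(1/c)^j*e^(i*j)*p(i,j)" by simp
qed

lemma Mset_closed:
  assumes ee: "e*e = 1" and gens: "gens \<subseteq> Mset e p"
  shows "g \<in> gen_group gens \<Longrightarrow> g \<in> Mset e p"
proof (induction rule: gen_group.induct)
  case gg_id
  have "fixd p 1 1" by (simp add: fixd_def)
  then show ?case by (auto simp: mid_def Mset_def)
next
  case (gg_gen g)
  then show ?case using gens by auto
next
  case (gg_inv g)
  from gg_inv.IH show ?case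
  proof (simp only: Mset_def, elim UnE CollectE exE conjE)
    fix x y assume g: "g = (x,0,0,y)" "x\<noteq>0" "y\<noteq>0" "fixd p x y"
    have m: "minv g = (1/x, 0, 0, 1/y)" using g by (simp add: Let_def)
    show "minv g \<in> {(x,0,0,y) | x y. x\<noteq>0 \<and> y\<noteq>0 \<and> fixd p x y} \<union> {(0,b,c,0) | b c. b\<noteq>0 \<and> c\<noteq>0 \<and> fixa e p b c}"
      unfolding m using g fix_dinv[of x y p] by simp
  next
    fix b c assume g: "g = (0,b,c,0)" "b\<noteq>0" "c\<noteq>0" "fixa e p b c"
    have m: "minv g = (0, 1/c, 1/b, 0)" using g by (simp add: Let_def)
    show "minv g \<in> {(x,0,0,y) | x y. x\<noteq>0 \<and> y\<noteq>0 \<and> fixd p x y} \<union> {(0,b,c,0) | b c. b\<noteq>0 \<and> c\<noteq>0 \<and> fixa e p b c}"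
      unfolding m using g fix_ainv[OF ee, of b c p] by simp
  qed
next
  case (gg_mult g h)
  from gg_mult.IH(1) show ?case
  proof (simp only: Mset_def, elim UnE CollectE exE conjE)
    fix x y assume g: "g = (x,0,0,y)" "x\<noteq>0" "y\<noteq>0" "fixd p x y"
    from gg_mult.IH(2) show "mmult g h \<in> {(x,0,0,y) | x y. x\<noteq>0 \<and> y\<noteq>0 \<and> fixd p x y} \<union> {(0,b,c,0) | b c. b\<noteq>0 \<and> c\<noteq>0 \<and> fixa e p b c}"
    proof (simp only: Mset_def, elim UnE CollectE exE conjE)
      fix x' y' assume h: "h = (x',0,0,y')" "x'\<noteq>0" "y'\<noteq>0" "fixd p x' y'"
      show ?thesis using g h fix_dd[of p x y x' y'] by simp
    next
      fix b c assume h: "h = (0,b,c,0)" "b\<noteq>0" "c\<noteq>0" "fixa e p b c"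
      show ?thesis using g h fix_da[of p x y e b c] by simp
    qed
  next
    fix b c assume g: "g = (0,b,c,0)" "b\<noteq>0" "c\<noteq>0" "fixa e p b c"
    from gg_mult.IH(2) show "mmult g h \<in> {(x,0,0,y) | x y. x\<noteq>0 \<and> y\<noteq>0 \<and> fixd p x y} \<union> {(0,b,c,0) | b c. b\<noteq>0 \<and> c\<noteq>0 \<and> fixa e p b c}"
    proof (simp only: Mset_def, elim UnE CollectE exE conjE)
      fix x' y' assume h: "h = (x',0,0,y')" "x'\<noteq>0" "y'\<noteq>0" "fixd p x' y'"
      show ?thesis using g h fix_ad[of p x' y' e b c] by simp
    next
      fix b' c' assume h: "h = (0,b',c',0)" "b'\<noteq>0" "c'\<noteq>0" "fixa e p b' c'"
      show ?thesis using g h fix_aa[OF ee, of p b c b' c'] by simp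
    qed
  qed
qed

lemma Mset_fix: assumes "p \<in> qpolys" "g \<in> Mset e p" shows "qact e g p = p"
  using assms(2)
proof (simp only: Mset_def, elim UnE CollectE exE conjE)
  fix x y assume g: "g = (x,0,0,y)" "fixd p x y"
  show "qact e g p = p" unfolding g(1) qact_diag[OF assms(1)]
  proof (rule ext, clarify)
    fix i j show "x^i*y^j*p(i,j) = p(i,j)" using g(2) unfolding fixd_def by blast
  qed
next
  fix b c assume g: "g = (0,b,c,0)" and a: "fixa e p b c" 
  show "qact e g p = p"
    unfolding g qact_anti[OF assms(1)]
  proof (rule ext, clarify)
    fix i j have "p(i,j) = c^j*b^i*e^(j*i)*p(j,i)" using a unfolding fixa_def by blast
    then show "c^j*b^i*e^(i*j)*p(j,i) = p(i,j)" by (simp add: mult.commute)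
  qed
qed

lemma fix_qact_d: assumes q: "p \<in> qpolys" and h: "qact e (x,0,0,y) p = p" shows "fixd p x y"
  unfolding fixd_def
proof (intro allI)
  fix i j
  have "x^i*y^j*p(i,j) = qact e (x,0,0,y) p (i,j)" unfolding qact_diag[OF q] by simp
  also have "\<dots> = p(i,j)" by (simp only: h)
  finally show "x^i*y^j*p(i,j) = p(i,j)" .
qed

lemma fix_qact_a: assumes q: "p \<in> qpolys" and h: "qact e (0,b,c,0) p = p" shows "fixa e p b c"
  unfolding fixa_def
proof (intro allI)
  fix i j
  have "c^i*b^j*e^(j*i)*p(i,j) = qact e (0,b,c,0) p (j,i)" unfolding qact_anti[OF q] by simp
  also have "\<dots> = p(j,i)" by (simp only: h)
  finally show "p(j,i) = c^i*b^j*e^(i*j)*p(i,j)" by (simp add: mult.commute)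
qed

lemma inv_char:
  assumes ee: "e*e = 1" and nz: "x\<noteq>0" "y\<noteq>0" "b\<noteq>0" "c\<noteq>0"
  shows "p \<in> invariants e (gen_group {(x,0,0,y),(0,b,c,0)}) \<longleftrightarrow> p \<in> qpolys \<and> fixd p x y \<and> fixa e p b c"
proof
  assume p: "p \<in> invariants e (gen_group {(x,0,0,y),(0,b,c,0)})"
  then have q: "p \<in> qpolys" by (simp add: invariants_def)
  have m1: "(x,0,0,y) \<in> gen_group {(x,0,0,y),(0,b,c,0)}" by (rule gen_group.gg_gen) simp
  have m2: "(0,b,c,0) \<in> gen_group {(x,0,0,y),(0,b,c,0)}" by (rule gen_group.gg_gen) simp
  have inv: "\<forall>g\<in>gen_group {(x,0,0,y),(0,b,c,0)}. qact e g p = p" using p unfolding invariants_def by simp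
  have h1: "qact e (x,0,0,y) p = p" using bspec[OF inv m1] .
  have h2: "qact e (0,b,c,0) p = p" using bspec[OF inv m2] .
  show "p \<in> qpolys \<and> fixd p x y \<and> fixa e p b c" using q fix_qact_d[OF q h1] fix_qact_a[OF q h2] by simp
next
  assume h: "p \<in> qpolys \<and> fixd p x y \<and> fixa e p b c"
  then have "{(x,0,0,y),(0,b,c,0)} \<subseteq> Mset e p" using nz by (auto simp: Mset_def)
  then have "\<forall>g\<in>gen_group {(x,0,0,y),(0,b,c,0)}. qact e g p = p"
    using Mset_closed[OF ee] Mset_fix[of p g e for g] h by blast
  then show "p \<in> invariants e (gen_group {(x,0,0,y),(0,b,c,0)})" using h unfolding invariants_def by blast
qed




lemma prim_nz: "primitive_root M (z::'k::field) \<Longrightarrow> z \<noteq> 0"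
  unfolding primitive_root_def by (cases "z = 0") (auto simp: power_0_left)

lemma prim_one: assumes "primitive_root M (z::'k::field)" shows "z^d = 1 \<longleftrightarrow> M dvd d"
proof -
  from assms have M: "M > 0" "z^M = 1" "\<forall>j. 0 < j \<and> j < M \<longrightarrow> z^j \<noteq> 1" by (auto simp: primitive_root_def)
  have "z^d = z^(d div M * M + d mod M)" by simp
  also have "\<dots> = (z^M)^(d div M) * z^(d mod M)" by (simp only: power_add power_mult mult.commute[of "d div M" M])
  finally have "z^d = (z^M)^(d div M) * z^(d mod M)" .
  then have e: "z^d = z^(d mod M)" using M by simp
  show ?thesis
  proof
    assume "z^d = 1"
    then have "z^(d mod M) = 1" using e by simp
    moreover have "d mod M < M" using M by simp
    ultimately have "d mod M = 0" using M(3) by (meson neq0_conv)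
    then show "M dvd d" by (simp add: mod_eq_0_iff_dvd)
  next
    assume "M dvd d" then show "z^d = 1" using e by simp
  qed
qed

lemma prim_eq: assumes "primitive_root M (z::'k::field)" shows "z^a = z^b \<longleftrightarrow> int M dvd int a - int b"
proof -
  have nz: "z \<noteq> 0" using prim_nz[OF assms] .
  have *: "z^a = z^b \<longleftrightarrow> int M dvd int a - int b" if ab: "a \<le> b" for a b
  proof -
    have "z^b = z^a * z^(b-a)" using ab by (metis le_add_diff_inverse power_add)
    then have "z^a = z^b \<longleftrightarrow> z^(b-a) = 1" using nz by auto
    also have "\<dots> \<longleftrightarrow> M dvd (b - a)" by (rule prim_one[OF assms])
    also have "\<dots> \<longleftrightarrow> int M dvd int b - int a" by (simp only: of_nat_diff[OF ab, symmetric] int_dvd_int_iff)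
    also have "\<dots> \<longleftrightarrow> int M dvd int a - int b" by (metis dvd_minus_iff minus_diff_eq)
    finally show ?thesis .
  qed
  show ?thesis
  proof (cases "a \<le> b")
    case True then show ?thesis using * by blast
  next
    case False then have "b \<le> a" by simp
    then show ?thesis using *[of b a] by (metis dvd_minus_iff minus_diff_eq)
  qed
qed

lemma prim_half: assumes "primitive_root (2*L) (z::'k::field)" shows "z^L = -1"
proof -
  have L: "L > 0" using assms by (simp add: primitive_root_def)
  have "(z^L)^2 = 1" using assms by (simp add: primitive_root_def power_mult[symmetric] mult.commute)
  then have "z^L = 1 \<or> z^L = -1" by (simp add: power2_eq_1_iff)
  moreover have "z^L \<noteq> 1" using assms L by (simp add: primitive_root_def)
  ultimately show ?thesis by simp
qed

fun sg :: "nat \<Rightarrow> 'k::field" where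
  "sg 0 = 1" | "sg (Suc n) = (-1)^n * sg n"

lemma sg_add: "(sg (a + c) :: 'k::field) = sg a * sg c * (-1)^(a*c)"
proof (induction c)
  case 0 then show ?case by simp
next
  case (Suc c)
  have "(sg (a + Suc c) :: 'k) = (-1)^(a+c) * sg (a+c)" by simp
  also have "\<dots> = (-1)^a * (-1)^c * (sg a * sg c * (-1)^(a*c))" by (simp only: Suc.IH power_add)
  also have "\<dots> = sg a * ((-1)^c * sg c) * ((-1)^a * (-1)^(a*c))" by (simp only: mult_ac)
  also have "\<dots> = sg a * sg (Suc c) * (-1)^(a * Suc c)" by (simp only: sg.simps mult_Suc_right power_add)
  finally show ?case .
qed

lemma sg_sq: "(sg a :: 'k::field) * sg a = 1"
  by (induction a) (auto simp: algebra_simps power_mult_distrib[symmetric])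

lemma neg1_sq: "((-1::'k::field)^n) * (-1)^n = 1"
  by (simp add: power_mult_distrib[symmetric])

lemma sg_double: "(sg (2*x) :: 'k::field) = (-1)^x"
proof -
  have "(sg (2*x) :: 'k) = sg x * sg x * (-1)^(x*x)" using sg_add[of x x] by (simp add: mult_2)
  also have "\<dots> = (-1)^(x*x)" by (simp add: sg_sq)
  also have "\<dots> = (-1)^x" by (cases "even x") (simp_all add: neg_one_even_power neg_one_odd_power)
  finally show ?thesis .
qed




lemma inv_step: assumes "(x::'k::field) \<noteq> 0"
  shows "x^i * (inverse x)^j * c = c \<longleftrightarrow> c = 0 \<or> x^i = x^j"
proof -
  have xj: "x^j \<noteq> 0" using assms by simp
  have "x^i * (inverse x)^j * c = c \<longleftrightarrow> c * (x^i * inverse (x^j) - 1) = 0"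
    by (simp add: power_inverse algebra_simps)
  also have "\<dots> \<longleftrightarrow> c = 0 \<or> x^i * inverse (x^j) = 1" by simp
  also have "x^i * inverse (x^j) = 1 \<longleftrightarrow> x^i = x^j" using xj by (simp add: field_simps)
  finally show ?thesis .
qed

lemma dvd_cancel_int: "0 < B \<Longrightarrow> int (A*B) dvd int (B*i) - int (B*j) \<longleftrightarrow> int A dvd int i - int j"
proof -
  assume B: "0 < B"
  have "int (A*B) dvd int (B*i) - int (B*j) \<longleftrightarrow> int B * int A dvd int B * (int i - int j)"
    by (simp add: algebra_simps)
  also have "\<dots> \<longleftrightarrow> int A dvd int i - int j" using B by (simp add: mult_dvd_mono)
  finally show ?thesis .
qed

lemma fixd_prim: assumes pz: "primitive_root (A*B) (z::'k::field)" and B: "0 < B"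
  shows "fixd p (z^B) (inverse (z^B)) \<longleftrightarrow> (\<forall>i j. p(i,j) \<noteq> 0 \<longrightarrow> int A dvd int i - int j)"
proof -
  have nz: "z^B \<noteq> 0" using prim_nz[OF pz] by simp
  have "\<And>i j. (z^B)^i * (inverse (z^B))^j * p(i,j) = p(i,j) \<longleftrightarrow> (p(i,j) \<noteq> 0 \<longrightarrow> int A dvd int i - int j)"
  proof -
    fix i j
    have "(z^B)^i * (inverse (z^B))^j * p(i,j) = p(i,j) \<longleftrightarrow> p(i,j) = 0 \<or> (z^B)^i = (z^B)^j"
      by (rule inv_step[OF nz])
    also have "(z^B)^i = (z^B)^j \<longleftrightarrow> z^(B*i) = z^(B*j)" by (simp add: power_mult)
    also have "\<dots> \<longleftrightarrow> int (A*B) dvd int (B*i) - int (B*j)" by (rule prim_eq[OF pz])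
    also have "\<dots> \<longleftrightarrow> int A dvd int i - int j" by (rule dvd_cancel_int[OF B])
    finally show "(z^B)^i * (inverse (z^B))^j * p(i,j) = p(i,j) \<longleftrightarrow> (p(i,j) \<noteq> 0 \<longrightarrow> int A dvd int i - int j)" by blast
  qed
  then show ?thesis unfolding fixd_def by blast
qed

lemma anti_twice: assumes ee: "e*e = (1::'k::field)" and a: "fixa e p b b" and nz: "p(i,j) \<noteq> 0"
  shows "b^(2*(i+j)) = 1"
proof -
  have 1: "p(j,i) = b^i*b^j*e^(i*j)*p(i,j)" using a unfolding fixa_def by blast
  have 2: "p(i,j) = b^j*b^i*e^(j*i)*p(j,i)" using a unfolding fixa_def by blast
  have 3: "p(i,j) = b^j*b^i*e^(j*i)*(b^i*b^j*e^(i*j)*p(i,j))" using 2 unfolding 1 .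
  have 4: "b^j*b^i*e^(j*i)*(b^i*b^j*e^(i*j)*p(i,j)) = b^(2*(i+j)) * (e^(i*j)*e^(i*j)) * p(i,j)"
  proof -
    have "b^(2*(i+j)) = b^i*b^j*(b^i*b^j)" by (simp only: mult_2 power_add)
    then show ?thesis by (simp add: mult_ac)
  qed
  have "p(i,j) = b^(2*(i+j)) * (e^(i*j)*e^(i*j)) * p(i,j)"
    using 3 4 by simp
  then have "p(i,j) = b^(2*(i+j)) * p(i,j)" using e2[OF ee] by simp
  then show ?thesis using nz by simp
qed

lemma anti_prim: assumes ee: "e*e = (1::'k::field)" and a: "fixa e p (z^C) (z^C)" and nz: "p(i,j) \<noteq> 0"
  and pz: "primitive_root (2*C*D) z" and C: "0 < C"
  shows "D dvd (i+j)"
proof -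
  have "(z^C)^(2*(i+j)) = 1" by (rule anti_twice[OF ee a nz])
  then have "z^(2*C*(i+j)) = 1" by (simp add: power_mult[symmetric] mult_ac)
  then have "2*C*D dvd 2*C*(i+j)" using prim_one[OF pz] by simp
  then show ?thesis using C by simp
qed




definition phi :: "'k::field qpoly \<Rightarrow> 'k qpoly" where
  "phi p = (\<lambda>(i,j). sg i * p(i,j))"

lemma phi_app: "phi p (i,j) = sg i * p(i,j)" by (simp add: phi_def)

lemma sg_nz: "(sg i :: 'k::field) \<noteq> 0"
proof
  assume "(sg i :: 'k) = 0"
  then have "(sg i :: 'k) * sg i = 0" by simp
  then show False using sg_sq[of i, where 'k='k] by simp
qed

lemma phi_phi: "phi (phi p) = p"
  by (rule ext, clarify) (simp add: phi_app mult.assoc[symmetric] sg_sq)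

lemma phi_zero: "phi p (i,j) = 0 \<longleftrightarrow> p(i,j) = 0"
  by (simp add: phi_app sg_nz)

lemma phi_qpolys: "p \<in> qpolys \<Longrightarrow> phi p \<in> qpolys"
proof -
  assume "p \<in> qpolys"
  moreover have "supp (phi p) = supp p" unfolding supp_def using phi_zero by fastforce
  ultimately show ?thesis by (simp add: qpolys_def)
qed

context
  fixes w \<eta> :: "'k::field" and N K Q R :: nat
  assumes pw: "primitive_root (2*N*K) w" and pe: "primitive_root (4*Q*R) \<eta>"
    and rel: "(odd N \<and> Q = N \<and> K = 2*R \<and> even R) \<or> (even N \<and> N = 2*Q \<and> R = K \<and> odd K)"
    and pos: "0 < N" "0 < K" "0 < Q" "0 < R"
begin

definition Sk :: "'k qpoly \<Rightarrow> bool" where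
  "Sk p \<longleftrightarrow> p \<in> qpolys \<and> fixd p (w^(2*K)) (inverse (w^(2*K))) \<and> fixa (-1) p (w^N) (w^N)"
definition Cm :: "'k qpoly \<Rightarrow> bool" where
  "Cm p \<longleftrightarrow> p \<in> qpolys \<and> fixd p (\<eta>^(2*R)) (inverse (\<eta>^(2*R))) \<and> fixa 1 p (\<eta>^Q) (\<eta>^Q)"

lemma pw': "primitive_root (N*(2*K)) w" using pw by (simp add: mult_ac)
lemma pw'': "primitive_root (2*N*K) w" using pw by simp
lemma pe': "primitive_root ((2*Q)*(2*R)) \<eta>" using pe by (simp add: mult_ac)
lemma pe'': "primitive_root (2*Q*(2*R)) \<eta>" using pe by (simp add: mult_ac)

lemma Sk_fixd: "fixd p (w^(2*K)) (inverse (w^(2*K))) \<longleftrightarrow> (\<forall>i j. p(i,j) \<noteq> 0 \<longrightarrow> int N dvd int i - int j)"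
  using fixd_prim[OF pw'] pos by simp
lemma Cm_fixd: "fixd p (\<eta>^(2*R)) (inverse (\<eta>^(2*R))) \<longleftrightarrow> (\<forall>i j. p(i,j) \<noteq> 0 \<longrightarrow> int (2*Q) dvd int i - int j)"
  using fixd_prim[OF pe'] pos by simp

lemma Sk_supp: "Sk p \<Longrightarrow> p(i,j) \<noteq> 0 \<Longrightarrow> int N dvd int i - int j \<and> K dvd (i+j)"
  unfolding Sk_def Sk_fixd using anti_prim[of "-1" p w N i j K] pw'' pos by auto

lemma Cm_supp: "Cm p \<Longrightarrow> p(i,j) \<noteq> 0 \<Longrightarrow> int (2*Q) dvd int i - int j \<and> 2*R dvd (i+j)"
  unfolding Cm_def Cm_fixd using anti_prim[of 1 p \<eta> Q i j "2*R"] pe'' pos by auto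

lemma supp_equiv: "(int N dvd int i - int j \<and> K dvd (i+j)) \<longleftrightarrow> (int (2*Q) dvd int i - int j \<and> 2*R dvd (i+j))"
proof -
  have par: "even (int i - int j) \<longleftrightarrow> even (i+j)" by simp
  show ?thesis
  proof (cases "odd N")
    case True
    then have r: "Q = N" "K = 2*R" "even R" using rel by auto
    show ?thesis
    proof
      assume a: "int N dvd int i - int j \<and> K dvd (i+j)"
      then have "even (i+j)" using r by (metis dvd_mult_left dvd_trans)
      then have "2 dvd int i - int j" using par by blast
      moreover have "coprime (2::int) (int N)" using True by simp
      ultimately have "2 * int N dvd int i - int j" using a by (simp add: divides_mult)
      then show "int (2*Q) dvd int i - int j \<and> 2*R dvd (i+j)" using a r by simp
    next
      assume "int (2*Q) dvd int i - int j \<and> 2*R dvd (i+j)"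
      then show "int N dvd int i - int j \<and> K dvd (i+j)" using r by (auto intro: dvd_mult_right)
    qed
  next
    case False
    then have r: "N = 2*Q" "R = K" "odd K" using rel by auto
    show ?thesis
    proof
      assume a: "int N dvd int i - int j \<and> K dvd (i+j)"
      then have "2 dvd int i - int j" using r by (metis dvd_mult_left dvd_trans of_nat_mult of_nat_numeral)
      then have "even (i+j)" using par by blast
      moreover have "coprime (2::nat) K" using r by simp
      ultimately have "2 * K dvd (i+j)" using a by (simp add: divides_mult)
      then show "int (2*Q) dvd int i - int j \<and> 2*R dvd (i+j)" using a r by simp
    next
      assume "int (2*Q) dvd int i - int j \<and> 2*R dvd (i+j)"
      then show "int N dvd int i - int j \<and> K dvd (i+j)" using r by (auto intro: dvd_mult_right)
    qed
  qed
qed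

lemma key: assumes "2*R dvd s" shows "(\<eta>^Q)^s * sg s = (w^N)^s"
proof -
  obtain t where t: "s = 2*R*t" using assms by blast
  have e1: "\<eta>^(2*Q*R) = -1" using prim_half[of "2*Q*R" \<eta>] pe by (simp add: mult_ac)
  have w1: "w^(N*K) = -1" using prim_half[of "N*K" w] pw by (simp add: mult_ac)
  have "(\<eta>^Q)^s = (\<eta>^(2*Q*R))^t" by (simp add: t power_mult[symmetric] mult_ac)
  then have A: "(\<eta>^Q)^s = (-1)^t" using e1 by simp
  have B: "sg s = ((-1)^(R*t) :: 'k)" using sg_double[of "R*t"] t by (simp add: mult_ac)
  show ?thesis
  proof (cases "odd N")
    case True
    then have r: "Q = N" "K = 2*R" "even R" using rel by auto
    have "(w^N)^s = (w^(N*K))^t" by (simp add: t r power_mult[symmetric] mult_ac)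
    then have C: "(w^N)^s = (-1)^t" using w1 by simp
    have "((-1)^(R*t) :: 'k) = 1" using r by simp
    then show ?thesis using A B C by simp
  next
    case False
    then have r: "N = 2*Q" "R = K" "odd K" using rel by auto
    have "(w^N)^s = ((w^(N*K))^2)^t" by (simp add: t r power_mult[symmetric] mult_ac)
    then have C: "(w^N)^s = 1" using w1 by simp
    have "((-1)^(R*t) :: 'k) = (-1)^t" using r by (simp add: power_mult neg_one_odd_power)
    then show ?thesis using A B C by (simp add: neg1_sq)
  qed
qed


lemma Sk_to_Cm: assumes S: "Sk p" shows "Cm (phi p)"
proof -
  have q: "phi p \<in> qpolys" using S unfolding Sk_def by (blast intro: phi_qpolys)
  have fd: "fixd (phi p) (\<eta>^(2*R)) (inverse (\<eta>^(2*R)))"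
    unfolding Cm_fixd using Sk_supp[OF S] supp_equiv phi_zero by blast
  have fa: "fixa 1 (phi p) (\<eta>^Q) (\<eta>^Q)" unfolding fixa_def
  proof (intro allI)
    fix i j
    have A: "p(j,i) = (w^N)^i*(w^N)^j*(-1)^(i*j)*p(i,j)" using S unfolding Sk_def fixa_def by blast
    show "phi p (j,i) = (\<eta>^Q)^i*(\<eta>^Q)^j*1^(i*j)*phi p (i,j)"
    proof (cases "p(i,j) = 0")
      case True
      then show ?thesis using A by (simp add: phi_app)
    next
      case False
      then have d: "2*R dvd (i+j)" using Sk_supp[OF S] supp_equiv by blast
      have k: "(\<eta>^Q)^(i+j) * (sg i * sg j * (-1)^(i*j)) = (w^N)^(i+j)" using key[OF d] by (simp only: sg_add)
      have "phi p (j,i) = sg j * ((w^N)^(i+j)*(-1)^(i*j)*p(i,j))" using A by (simp add: phi_app power_add)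
      also have "\<dots> = sg j * ((\<eta>^Q)^(i+j) * (sg i * sg j * (-1)^(i*j))*(-1)^(i*j)*p(i,j))" by (simp only: k)
      also have "\<dots> = (\<eta>^Q)^(i+j) * (sg j * sg j) * ((-1)^(i*j)*(-1)^(i*j)) * (sg i * p(i,j))" by (simp only: mult_ac)
      also have "\<dots> = (\<eta>^Q)^i*(\<eta>^Q)^j*1^(i*j)*phi p (i,j)" by (simp add: sg_sq neg1_sq phi_app power_add)
      finally show ?thesis .
    qed
  qed
  show ?thesis using q fd fa by (simp add: Cm_def)
qed

lemma Cm_to_Sk: assumes C: "Cm p" shows "Sk (phi p)"
proof -
  have q: "phi p \<in> qpolys" using C unfolding Cm_def by (blast intro: phi_qpolys)
  have fd: "fixd (phi p) (w^(2*K)) (inverse (w^(2*K)))"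
    unfolding Sk_fixd using Cm_supp[OF C] supp_equiv phi_zero by blast
  have fa: "fixa (-1) (phi p) (w^N) (w^N)" unfolding fixa_def
  proof (intro allI)
    fix i j
    have A: "p(j,i) = (\<eta>^Q)^i*(\<eta>^Q)^j*1^(i*j)*p(i,j)" using C unfolding Cm_def fixa_def by blast
    show "phi p (j,i) = (w^N)^i*(w^N)^j*(-1)^(i*j)*phi p (i,j)"
    proof (cases "p(i,j) = 0")
      case True
      then show ?thesis using A by (simp add: phi_app)
    next
      case False
      then have d: "2*R dvd (i+j)" using Cm_supp[OF C] by blast
      have k: "(\<eta>^Q)^(i+j) * (sg i * sg j * (-1)^(i*j)) = (w^N)^(i+j)" using key[OF d] by (simp only: sg_add)
      have "(w^N)^i*(w^N)^j*(-1)^(i*j)*phi p (i,j) = (w^N)^(i+j)*(-1)^(i*j)*(sg i * p(i,j))" by (simp add: phi_app power_add)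
      also have "\<dots> = (\<eta>^Q)^(i+j) * (sg i * sg j * (-1)^(i*j))*(-1)^(i*j)*(sg i * p(i,j))" by (simp only: k)
      also have "\<dots> = (\<eta>^Q)^(i+j) * (sg i * sg i) * ((-1)^(i*j)*(-1)^(i*j)) * (sg j * p(i,j))" by (simp only: mult_ac)
      also have "\<dots> = phi p (j,i)" using A by (simp add: sg_sq neg1_sq phi_app power_add mult_ac)
      finally show ?thesis by simp
    qed
  qed
  show ?thesis using q fd fa by (simp add: Sk_def)
qed

lemma neg1_par: "((-1::'k)^n) = (if even n then 1 else -1)"
  by (cases "even n") (simp_all add: neg_one_even_power neg_one_odd_power)

lemma Sk_par: assumes S: "Sk p" and nz: "p(a,b) \<noteq> 0" shows "even a \<longleftrightarrow> even b"
proof -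
  have d: "int N dvd int a - int b" "K dvd (a+b)" using Sk_supp[OF S nz] by auto
  have "even (a+b)"
  proof (cases "odd N")
    case True then have "even K" using rel by auto
    then show ?thesis using d(2) by (metis dvd_trans)
  next
    case False then have "even (int a - int b)" using d(1) by (metis dvd_trans even_of_nat)
    then show ?thesis by simp
  qed
  then show ?thesis by simp
qed

lemma phi_mult: assumes S: "Sk x" shows "phi (qmult (-1) x y) = qmult 1 (phi x) (phi y)"
proof (rule ext, clarify)
  fix i j
  have "phi (qmult (-1) x y) (i,j) = (\<Sum>a\<le>i. \<Sum>b\<le>j. sg i * ((-1)^(b*(i-a)) * x(a,b) * y(i-a,j-b)))"
    by (simp add: phi_app qmult_def sum_distrib_left)
  also have "\<dots> = (\<Sum>a\<le>i. \<Sum>b\<le>j. 1^(b*(i-a)) * (sg a * x(a,b)) * (sg (i-a) * y(i-a,j-b)))"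
  proof (intro sum.cong refl)
    fix a b assume a: "a \<in> {..i}"
    show "sg i * ((-1)^(b*(i-a)) * x(a,b) * y(i-a,j-b)) = 1^(b*(i-a)) * (sg a * x(a,b)) * (sg (i-a) * y(i-a,j-b))"
    proof (cases "x(a,b) = 0")
      case True then show ?thesis by simp
    next
      case False
      then have par: "even a \<longleftrightarrow> even b" using Sk_par[OF S] by blast
      have m: "((-1::'k)^(b*(i-a))) = (-1)^(a*(i-a))" using par by (simp add: neg1_par)
      have si: "(sg i :: 'k) = sg a * sg (i-a) * (-1)^(a*(i-a))" using sg_add[of a "i-a"] a by simp
      have "sg i * ((-1)^(b*(i-a)) * x(a,b) * y(i-a,j-b)) = sg a * sg (i-a) * ((-1)^(a*(i-a)) * (-1)^(a*(i-a))) * x(a,b) * y(i-a,j-b)"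
        by (simp only: si m mult_ac)
      also have "\<dots> = 1^(b*(i-a)) * (sg a * x(a,b)) * (sg (i-a) * y(i-a,j-b))" by (simp add: neg1_sq mult_ac)
      finally show ?thesis .
    qed
  qed
  also have "\<dots> = qmult 1 (phi x) (phi y) (i,j)" by (simp add: qmult_def phi_app)
  finally show "phi (qmult (-1) x y) (i,j) = qmult 1 (phi x) (phi y) (i,j)" .
qed

lemma inv_Sk: "invariants (-1) (gen_group {(w^(2*K),0,0,inverse(w^(2*K))),(0,w^N,w^N,0)}) = {p. Sk p}"
  using inv_char[of "-1::'k" "w^(2*K)" "inverse(w^(2*K))" "w^N" "w^N"] prim_nz[OF pw]
  unfolding Sk_def by auto

lemma inv_Cm: "invariants 1 (gen_group {(\<eta>^(2*R),0,0,inverse(\<eta>^(2*R))),(0,\<eta>^Q,\<eta>^Q,0)}) = {p. Cm p}"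
  using inv_char[of "1::'k" "\<eta>^(2*R)" "inverse(\<eta>^(2*R))" "\<eta>^Q" "\<eta>^Q"] prim_nz[OF pe]
  unfolding Cm_def by auto

lemma iso_core: "alg_iso_invariants (-1) (gen_group {(w^(2*K),0,0,inverse(w^(2*K))),(0,w^N,w^N,0)})
                    1 (gen_group {(\<eta>^(2*R),0,0,inverse(\<eta>^(2*R))),(0,\<eta>^Q,\<eta>^Q,0)})"
  unfolding alg_iso_invariants_def inv_Sk inv_Cm
proof (intro exI[of _ phi] conjI ballI allI)
  show "bij_betw phi {p. Sk p} {p. Cm p}"
    by (rule bij_betw_byWitness[where f'=phi]) (auto simp: phi_phi Sk_to_Cm Cm_to_Sk)
next
  fix x y assume "x \<in> {p. Sk p}" "y \<in> {p. Sk p}"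
  then show "phi (qadd x y) = qadd (phi x) (phi y)" "phi (qmult (-1) x y) = qmult 1 (phi x) (phi y)"
    using phi_mult by (auto simp: phi_def qadd_def algebra_simps)
next
  fix c x assume "x \<in> {p. Sk p}"
  show "phi (qsmult c x) = qsmult c (phi x)" by (auto simp: phi_def qsmult_def algebra_simps)
next
  show "phi qone = qone" by (auto simp: phi_def qone_def)
qed

end




lemma theta_S: assumes "(n,k) \<in> S_set" shows "theta (n,k) \<in> T_set \<and> theta_inv (theta (n,k)) = (n,k)"
proof -
  from assms have a: "n>0" "k>0" "coprime n k" "n\<ge>3" "odd (n-k)" "k mod 4 \<noteq> 2" by (auto simp: S_set_def coprime_iff_gcd_eq_1)
  show ?thesis
  proof (cases "odd n")
    case True
    have ke: "even k" using True a(5) by auto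
    then obtain h where h: "k = 2*h" by blast
    have he: "even h" using a(6) h by presburger
    have kh: "k div 2 = h" using h by simp
    have "coprime n h" using a(3) h by simp
    then have g: "coprime (n + h) n" by (metis coprime_commute add.commute coprime_iff_gcd_eq_1 gcd_add1)
    have t: "theta (n,k) = (n+h, n)" using True kh by (simp add: theta_def)
    have t2: "theta_inv (n+h,n) = (n, k)" using he h by (simp add: theta_inv_def)
    have t3: "(n+h, n) \<in> T_set" using g a h unfolding T_set_def coprime_iff_gcd_eq_1 by simp
    show ?thesis using t t2 t3 by simp
  next
    case False
    then obtain h where h: "n = 2*h" by blast
    have ko: "odd k" using False a(5) by auto
    have "coprime h k" using a(3) h by simp
    then have g: "coprime (h + k) h" by (metis coprime_commute add.commute coprime_iff_gcd_eq_1 gcd_add1)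
    have "h \<ge> 2" using a h by linarith
    have t: "theta (n,k) = (h+k, h)" using False h by (simp add: theta_def)
    have t2: "theta_inv (h+k,h) = (n, k)" using ko h by (simp add: theta_inv_def)
    have t3: "(h+k, h) \<in> T_set" using g a \<open>h\<ge>2\<close> unfolding T_set_def coprime_iff_gcd_eq_1 by simp
    show ?thesis using t t2 t3 by simp
  qed
qed

lemma theta_T: assumes "(m,q) \<in> T_set" shows "theta_inv (m,q) \<in> S_set \<and> theta (theta_inv (m,q)) = (m,q)"
proof -
  from assms have a: "1<q" "q<m" "coprime m q" by (auto simp: T_set_def coprime_iff_gcd_eq_1)
  have c: "coprime (m-q) q" using a(3)
    by (metis coprime_iff_gcd_eq_1 gcd_diff1)
  show ?thesis
  proof (cases "even (m-q)")
    case True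
    have qo: "odd q"
    proof
      assume "even q"
      moreover then have "even m" using True by (metis diff_add_cancel even_add)
      ultimately show False using a(3) coprime_common_divisor[of m q 2] by auto
    qed
    have "coprime q 2" using qo by simp
    then have g: "coprime q (2*(m-q))" using c by (metis coprime_commute coprime_mult_right_iff)
    have q3: "q \<ge> 3" using qo a(1) by presburger
    have t: "theta_inv (m,q) = (q, 2*(m-q))" using True by (simp add: theta_inv_def)
    have t2: "theta (q, 2*(m-q)) = (m,q)" using qo by (simp add: theta_def)
    have md: "(2*(m-q)) mod 4 \<noteq> 2" using True by presburger
    have od: "odd (q - 2*(m-q))" using qo by simp
    have t3: "(q, 2*(m-q)) \<in> S_set" using g q3 a md od unfolding S_set_def coprime_iff_gcd_eq_1 by simp
    show ?thesis using t t2 t3 by simp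
  next
    case False
    have g: "coprime (2*q) (m-q)" using c False by (simp add: coprime_commute)
    have t: "theta_inv (m,q) = (2*q, m-q)" using False by (simp add: theta_inv_def)
    have t2: "theta (2*q, m-q) = (m,q)" by (simp add: theta_def)
    have md: "(m-q) mod 4 \<noteq> 2" using False by presburger
    have od: "odd (2*q - (m-q))" using False by simp
    have t3: "(2*q, m-q) \<in> S_set" using g a md od unfolding S_set_def coprime_iff_gcd_eq_1 by simp
    show ?thesis using t t2 t3 by simp
  qed
qed


lemma main_iso:
  fixes w \<eta> :: "'k::field"
  assumes S: "(n,k) \<in> S_set" and th: "theta (n,k) = (m,q)"
    and pw: "primitive_root (nat (2*n*k)) w" and pe: "primitive_root (nat (4*q*(m-q))) \<eta>"
  shows "alg_iso_invariants (-1) (G_grp n k w) 1 (D_grp m q \<eta>)"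
proof -
  from S have a: "n>0" "k>0" "odd (n-k)" "k mod 4 \<noteq> 2" by (auto simp: S_set_def)
  have T: "(m,q) \<in> T_set" using theta_S[OF S] th by simp
  then have b: "1 < q" "q < m" by (auto simp: T_set_def)
  define N where "N = nat n"
  define K where "K = nat k"
  define Q where "Q = nat q"
  define R where "R = nat (m-q)"
  have nN: "n = int N" and kK: "k = int K" and qQ: "q = int Q" and rR: "m - q = int R"
    using a b by (auto simp: N_def K_def Q_def R_def)
  have pos: "0 < N" "0 < K" "0 < Q" "0 < R" using a b nN kK qQ rR by auto
  have pw': "primitive_root (2*N*K) w"
  proof -
    have "nat (2*n*k) = 2*N*K" using nN kK by (simp add: nat_mult_distrib)
    then show ?thesis using pw by simp
  qed
  have pe': "primitive_root (4*Q*R) \<eta>"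
  proof -
    have "nat (4*q*(m-q)) = 4*Q*R" using qQ rR by (simp add: nat_mult_distrib)
    then show ?thesis using pe by simp
  qed
  have rel: "(odd N \<and> Q = N \<and> K = 2*R \<and> even R) \<or> (even N \<and> N = 2*Q \<and> R = K \<and> odd K)"
  proof (cases "odd n")
    case True
    have ke: "even k" using True a(3) by auto
    then obtain h where h: "k = 2*h" by blast
    have he: "even h" using a(4) h by presburger
    have "theta (n,k) = (n + h, n)" using True h by (simp add: theta_def)
    then have mq: "m = n + h" "q = n" using th by auto
    have "odd N" using True nN by simp
    moreover have "Q = N" using mq by (simp add: Q_def N_def)
    moreover have "K = 2*R" using mq h a by (simp add: K_def R_def)
    moreover have "even R" using mq he a h by (simp add: R_def even_nat_iff)
    ultimately show ?thesis by blast
  next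
    case False
    then obtain h where h: "n = 2*h" by blast
    have ko: "odd k" using False a(3) by auto
    have "theta (n,k) = (h + k, h)" using False h by (simp add: theta_def)
    then have mq: "m = h + k" "q = h" using th by auto
    have "even N" using False nN by simp
    moreover have "N = 2*Q" using mq h by (simp add: Q_def N_def nat_mult_distrib)
    moreover have "R = K" using mq by (simp add: K_def R_def)
    moreover have "odd K" using ko kK by simp
    ultimately show ?thesis by blast
  qed
  have G: "G_grp n k w = gen_group {(w^(2*K),0,0,inverse(w^(2*K))),(0,w^N,w^N,0)}"
  proof -
    have "2*k = int (2*K)" using kK by simp
    then have 1: "w powi (2*k) = w^(2*K)" by (simp only: power_int_of_nat)
    have e: "-2*k = -(2*k)" by simp
    have 2: "w powi (-2*k) = inverse (w^(2*K))" by (simp only: e power_int_minus 1)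
    have 3: "w powi n = w^N" by (simp only: nN power_int_of_nat)
    show ?thesis unfolding G_grp_def 1 2 3 ..
  qed
  have D: "D_grp m q \<eta> = gen_group {(\<eta>^(2*R),0,0,inverse(\<eta>^(2*R))),(0,\<eta>^Q,\<eta>^Q,0)}"
  proof -
    have "2*(m-q) = int (2*R)" using rR by simp
    then have 1: "\<eta> powi (2*(m-q)) = \<eta>^(2*R)" by (simp only: power_int_of_nat)
    have e: "-2*(m-q) = -(2*(m-q))" by simp
    have 2: "\<eta> powi (-2*(m-q)) = inverse (\<eta>^(2*R))" by (simp only: e power_int_minus 1)
    have 3: "\<eta> powi q = \<eta>^Q" by (simp only: qQ power_int_of_nat)
    show ?thesis unfolding D_grp_def 1 2 3 ..
  qed
  show ?thesis unfolding G D by (rule iso_core[OF pw' pe' rel pos])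
qed


theorem mainTheorem17:
  fixes kk :: "'k::field_char_0 itself"
  assumes "alg_closed TYPE('k)"
  shows "theta ` S_set \<subseteq> T_set
    \<and> bij_betw theta S_set T_set
    \<and> (\<forall>x\<in>S_set. theta_inv (theta x) = x)
    \<and> (\<forall>y\<in>T_set. theta_inv y \<in> S_set \<and> theta (theta_inv y) = y)
    \<and> (\<forall>n k m q. \<forall>w \<eta> :: 'k.
          (n,k) \<in> S_set \<longrightarrow> theta (n,k) = (m,q)
          \<longrightarrow> primitive_root (nat (2*n*k)) w
          \<longrightarrow> primitive_root (nat (4*q*(m-q))) \<eta>
          \<longrightarrow> alg_iso_invariants (-1) (G_grp n k w) 1 (D_grp m q \<eta>))"
proof -
  have A: "\<forall>x\<in>S_set. theta x \<in> T_set \<and> theta_inv (theta x) = x"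
  proof
    fix x assume "x \<in> S_set"
    moreover obtain n k where "x = (n,k)" by (cases x)
    ultimately show "theta x \<in> T_set \<and> theta_inv (theta x) = x" using theta_S by simp
  qed
  have B: "\<forall>y\<in>T_set. theta_inv y \<in> S_set \<and> theta (theta_inv y) = y"
  proof
    fix y assume "y \<in> T_set"
    moreover obtain m q where "y = (m,q)" by (cases y)
    ultimately show "theta_inv y \<in> S_set \<and> theta (theta_inv y) = y" using theta_T by simp
  qed
  have C: "bij_betw theta S_set T_set"
    by (rule bij_betw_byWitness[where f'=theta_inv]) (use A B in auto)
  have D: "\<forall>n k m q. \<forall>w \<eta> :: 'k.
          (n,k) \<in> S_set \<longrightarrow> theta (n,k) = (m,q)
          \<longrightarrow> primitive_root (nat (2*n*k)) w
          \<longrightarrow> primitive_root (nat (4*q*(m-q))) \<eta>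
          \<longrightarrow> alg_iso_invariants (-1) (G_grp n k w) 1 (D_grp m q \<eta>)"
    using main_iso by blast
  show ?thesis using A B C D by blast
qed

end
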